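(* Let $r,n\geq1$ and let $\mathcal{P}^{\subset}_{r,n}$ be the set of nested $r$-partitions of $n$. Define $$\phi_0:\mathcal{P}^{\subset}_{r,n}\to(\mathbb{Z}^2)^{\times n}/\mathcal{S}_n,\qquad \phi_0(\mu)=\big[(i(s)-a,\ j(s)-a)\big]_{1\leq a\leq r,\ s\in\mu_a},$$ the unordered $n$-tuple (multiset) of these points. Then $\phi_0$ is injective.
   Context: A partition $\nu=(\nu^1\geq\cdots\geq\nu^l)$ is identified with the set of integral points $\{(i,j)\in\mathbb{Z}^2: 1\leq i\leq l,\ 1\leq j\leq\nu^i\}$. For a box $s=(i,j)$ write $i(s)=i$ and $j(s)=j$. An $r$-partition of $n$ is a tuple $\mu=(\mu_1,\dots,\mu_r)$ of partitions with $\sum_a|\mu_a|=n$. It is nested if $\mu_r\subseteq\mu_{r-1}\subseteq\cdots\subseteq\mu_1$ as subsets of $\mathbb{Z}^2$. The symmetric group $\mathcal{S}_n$ acts on $(\mathbb{Z}^2)^{\times n}$ by permuting the factors. *)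

theory Defs
  imports Main "HOL-Library.Multiset"
begin

definition is_partition :: "nat list \<Rightarrow> bool" where
  "is_partition nu \<longleftrightarrow> sorted_wrt (\<ge>) nu \<and> (\<forall>x\<in>set nu. 0 < x)"

definition boxes :: "nat list \<Rightarrow> (int \<times> int) set" where
  "boxes nu = {(i, j). 1 \<le> i \<and> i \<le> int (length nu) \<and> 1 \<le> j \<and> j \<le> int (nu ! nat (i - 1))}"

definition psize :: "nat list \<Rightarrow> nat" where
  "psize nu = sum_list nu"

text \<open>An r-partition of n: a list (mu_1,...,mu_r) of r partitions with total size n;
 mu ! (a-1) is mu_a.\<close>
definition is_rpartition :: "nat \<Rightarrow> nat \<Rightarrow> nat list list \<Rightarrow> bool" where
  "is_rpartition r n mu \<longleftrightarrow> length mu = r \<and> (\<forall>p\<in>set mu. is_partition p)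
     \<and> (\<Sum>p\<leftarrow>mu. psize p) = n"

definition nested :: "nat list list \<Rightarrow> bool" where
  "nested mu \<longleftrightarrow> (\<forall>a. Suc a < length mu \<longrightarrow> boxes (mu ! Suc a) \<subseteq> boxes (mu ! a))"

definition nested_rpartitions :: "nat \<Rightarrow> nat \<Rightarrow> nat list list set" where
  "nested_rpartitions r n = {mu. is_rpartition r n mu \<and> nested mu}"

definition phi0 :: "nat list list \<Rightarrow> (int \<times> int) multiset" where
  "phi0 mu = (\<Sum>a\<in>{1..length mu}.
      image_mset (\<lambda>(i, j). (i - int a, j - int a)) (mset_set (boxes (mu ! (a - 1)))))"

end

theory Submission
  imports Defs
begin

lemma boxes_pos: "(i, j) \<in> boxes p \<Longrightarrow> 1 \<le> i \<and> 1 \<le> j"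
  by (simp add: boxes_def)

lemma finite_boxes: "finite (boxes p)"
proof -
  have "boxes p \<subseteq> {1..int (length p)} \<times> {1..int (sum_list p)}"
  proof
    fix x assume "x \<in> boxes p"
    then obtain i j where x: "x = (i, j)" and h: "1 \<le> i" "i \<le> int (length p)" "1 \<le> j"
      "j \<le> int (p ! nat (i - 1))" by (auto simp: boxes_def)
    have "p ! nat (i - 1) \<le> sum_list p"
      using h by (intro elem_le_sum_list) auto
    then show "x \<in> {1..int (length p)} \<times> {1..int (sum_list p)}" using x h by auto
  qed
  then show ?thesis by (rule finite_subset) auto
qed

lemma boxes_down:
  assumes "is_partition p" "(i, j) \<in> boxes p" "1 \<le> i'" "i' \<le> i" "1 \<le> j'" "j' \<le> j"
  shows "(i', j') \<in> boxes p"
proof -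
  have h: "1 \<le> i" "i \<le> int (length p)" "1 \<le> j" "j \<le> int (p ! nat (i - 1))"
    using assms(2) by (auto simp: boxes_def)
  have "p ! nat (i - 1) \<le> p ! nat (i' - 1)"
  proof (cases "i' = i")
    case False
    then have "nat (i' - 1) < nat (i - 1)" using assms h by auto
    moreover have "nat (i - 1) < length p" using h by auto
    ultimately show ?thesis using assms(1) unfolding is_partition_def
      by (auto simp: sorted_wrt_iff_nth_less)
  qed simp
  then show ?thesis using h assms by (auto simp: boxes_def)
qed

lemma boxes_inj:
  assumes "is_partition p" "is_partition q" "boxes p = boxes q"
  shows "p = q"
proof -
  have len: "\<And>p k. is_partition p \<Longrightarrow> (int k + 1, 1) \<in> boxes p \<longleftrightarrow> k < length p"
  proof -
    fix p :: "nat list" and k assume "is_partition p"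
    then have "k < length p \<Longrightarrow> 0 < p ! k" unfolding is_partition_def by auto
    then show "(int k + 1, 1) \<in> boxes p \<longleftrightarrow> k < length p" by (auto simp: boxes_def)
  qed
  have L: "length p = length q"
  proof -
    have "\<And>k. k < length p \<longleftrightarrow> k < length q"
      using len[OF assms(1)] len[OF assms(2)] assms(3) by metis
    then show ?thesis by (meson linorder_neqE_nat less_irrefl)
  qed
  have el: "\<And>p k j. k < length p \<Longrightarrow> (int k + 1, int j) \<in> boxes p \<longleftrightarrow> 1 \<le> j \<and> j \<le> p ! k"
    by (auto simp: boxes_def)
  show ?thesis
  proof (rule nth_equalityI[OF L])
    fix k assume k: "k < length p"
    have "\<And>j. 1 \<le> j \<and> j \<le> p ! k \<longleftrightarrow> 1 \<le> j \<and> j \<le> q ! k"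
      using el[OF k] el[of k q] k L assms(3) by metis
    moreover have "0 < p ! k" "0 < q ! k" using assms(1,2) k L unfolding is_partition_def by auto
    ultimately show "p ! k = q ! k"
      by (metis One_nat_def Suc_leI le_antisym order_refl)
  qed
qed

lemma nested_trans:
  assumes "nested mu" "b < length mu"
  shows "c \<le> b \<Longrightarrow> boxes (mu ! b) \<subseteq> boxes (mu ! c)"
  using assms(2)
proof (induction b)
  case 0 then show ?case by simp
next
  case (Suc b)
  show ?case
  proof (cases "c = Suc b")
    case False
    then have "boxes (mu ! b) \<subseteq> boxes (mu ! c)" using Suc by auto
    moreover have "boxes (mu ! Suc b) \<subseteq> boxes (mu ! b)" using assms(1) Suc.prems
      unfolding nested_def by auto
    ultimately show ?thesis by blast
  qed simp
qed

lemma interval_lemma: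
  fixes A :: "nat set"
  assumes "finite A" "\<forall>b\<in>A. a0 \<le> b" "\<forall>b\<in>A. \<forall>c. a0 \<le> c \<and> c \<le> b \<longrightarrow> c \<in> A"
  shows "A = {a0..<a0 + card A}"
proof (cases "A = {}")
  case False
  define m where "m = Max A"
  have mA: "m \<in> A" using False assms(1) m_def by simp
  have "A = {a0..m}"
  proof
    show "A \<subseteq> {a0..m}" using assms(1,2) m_def by auto
    show "{a0..m} \<subseteq> A" using assms(3) mA by auto
  qed
  moreover have "a0 \<le> m" using mA assms(2) by auto
  ultimately show ?thesis by auto
qed simp

definition AA :: "nat list list \<Rightarrow> int \<times> int \<Rightarrow> nat set" where
  "AA mu p = {b \<in> {1..length mu}. (fst p + int b, snd p + int b) \<in> boxes (mu ! (b - 1))}"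

lemma count_phi0: "count (phi0 mu) p = card (AA mu p)"
proof -
  have "count (phi0 mu) p = (\<Sum>a\<in>{1..length mu}.
      count (image_mset (\<lambda>(i, j). (i - int a, j - int a)) (mset_set (boxes (mu ! (a - 1))))) p)"
    unfolding phi0_def by (simp add: count_sum)
  also have "\<dots> = (\<Sum>a\<in>{1..length mu}.
      if (fst p + int a, snd p + int a) \<in> boxes (mu ! (a - 1)) then 1 else 0)"
  proof (rule sum.cong)
    fix a assume "a \<in> {1..length mu}"
    let ?f = "\<lambda>(i, j). (i - int a, j - int a)"
    have inj: "inj_on ?f (boxes (mu ! (a - 1)))" by (auto simp: inj_on_def)
    have "image_mset ?f (mset_set (boxes (mu ! (a - 1)))) = mset_set (?f ` boxes (mu ! (a - 1)))"
      using image_mset_mset_set[OF inj] by simp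
    moreover have "p \<in> ?f ` boxes (mu ! (a - 1)) \<longleftrightarrow> (fst p + int a, snd p + int a) \<in> boxes (mu ! (a - 1))"
      by (cases p) (force simp: image_iff)
    ultimately show "count (image_mset ?f (mset_set (boxes (mu ! (a - 1))))) p =
      (if (fst p + int a, snd p + int a) \<in> boxes (mu ! (a - 1)) then 1 else 0)"
      using finite_boxes by (simp add: count_mset_set')
  qed simp
  also have "\<dots> = card (AA mu p)"
    by (simp add: sum.If_cases AA_def Int_def)
  finally show ?thesis .
qed

lemma AA_interval:
  assumes "\<forall>q\<in>set mu. is_partition q" "nested mu"
  shows "AA mu p = {nat (max 1 (max (1 - fst p) (1 - snd p)))..<
     nat (max 1 (max (1 - fst p) (1 - snd p))) + card (AA mu p)}"
proof (rule interval_lemma)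
  let ?a0 = "nat (max 1 (max (1 - fst p) (1 - snd p)))"
  show "finite (AA mu p)" by (simp add: AA_def)
  show "\<forall>b\<in>AA mu p. ?a0 \<le> b"
    by (auto simp: AA_def dest!: boxes_pos)
  show "\<forall>b\<in>AA mu p. \<forall>c. ?a0 \<le> c \<and> c \<le> b \<longrightarrow> c \<in> AA mu p"
  proof (intro ballI allI impI)
    fix b c assume b: "b \<in> AA mu p" and c: "?a0 \<le> c \<and> c \<le> b"
    have b1: "1 \<le> b" "b \<le> length mu" and bb: "(fst p + int b, snd p + int b) \<in> boxes (mu ! (b - 1))"
      using b by (auto simp: AA_def)
    have c1: "1 \<le> c" "c \<le> length mu" using c b1 by auto
    have sub: "boxes (mu ! (b - 1)) \<subseteq> boxes (mu ! (c - 1))"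
    proof (rule nested_trans[OF assms(2)])
      show "b - 1 < length mu" using b1 by simp
      show "c - 1 \<le> b - 1" using c by (simp add: diff_le_mono)
    qed
    have part: "is_partition (mu ! (c - 1))" using assms(1) c1 by auto
    have "(fst p + int c, snd p + int c) \<in> boxes (mu ! (c - 1))"
    proof (rule boxes_down[OF part])
      show "(fst p + int b, snd p + int b) \<in> boxes (mu ! (c - 1))" using bb sub by blast
    qed (use c b1 c1 in auto)
    then show "c \<in> AA mu p" using c1 by (auto simp: AA_def)
  qed
qed

theorem lemma6p6:
  fixes r n :: nat
  assumes "1 \<le> r" and "1 \<le> n"
  shows "inj_on phi0 (nested_rpartitions r n)"
proof (rule inj_onI)
  fix mu mu' assume m: "mu \<in> nested_rpartitions r n" and m': "mu' \<in> nested_rpartitions r n"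
    and eq: "phi0 mu = phi0 mu'"
  have pm: "\<forall>q\<in>set mu. is_partition q" "nested mu" "length mu = r"
    using m by (auto simp: nested_rpartitions_def is_rpartition_def)
  have pm': "\<forall>q\<in>set mu'. is_partition q" "nested mu'" "length mu' = r"
    using m' by (auto simp: nested_rpartitions_def is_rpartition_def)
  have AAeq: "AA mu p = AA mu' p" for p
    using AA_interval[OF pm(1,2), of p] AA_interval[OF pm'(1,2), of p]
      count_phi0[of mu p] count_phi0[of mu' p] eq by metis
  show "mu = mu'"
  proof (rule nth_equalityI)
    show "length mu = length mu'" using pm pm' by simp
    fix k assume k: "k < length mu"
    have "boxes (mu ! k) = boxes (mu' ! k)"
    proof (intro set_eqI)
      fix q :: "int \<times> int"
      obtain x y where q: "q = (x, y)" by (cases q)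
      have "q \<in> boxes (mu ! k) \<longleftrightarrow> Suc k \<in> AA mu (x - int (Suc k), y - int (Suc k))"
        using k q by (auto simp: AA_def)
      moreover have "q \<in> boxes (mu' ! k) \<longleftrightarrow> Suc k \<in> AA mu' (x - int (Suc k), y - int (Suc k))"
        using k q pm pm' by (auto simp: AA_def)
      ultimately show "q \<in> boxes (mu ! k) \<longleftrightarrow> q \<in> boxes (mu' ! k)" using AAeq by simp
    qed
    then show "mu ! k = mu' ! k"
      using boxes_inj pm(1) pm'(1) k pm(3) pm'(3) by (metis nth_mem)
  qed
qed

end
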